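(* Let $d \geq 1$ and let $\mathbb{P}$ be a probability measure on $\Omega = \mathbb{R}^{\mathcal{E}^d}$ satisfying assumptions A1 and A2 below. For $x \in \mathbb{Z}^d$, let $C_x$ be the subgraph of the directed nearest neighbor graph $\mathcal{N}_D$ induced by the vertices $y$ such that $y \to x$ in $\mathcal{N}_D$. Then $\mathbb{P}$-almost surely, $C_x$ is finite for all $x \in \mathbb{Z}^d$.
   Context: $\mathcal{E}^d$ is the set of nearest-neighbor edges $\{x,y\}$ ($\|x-y\|_1=1$) of $\mathbb{Z}^d$. $\Omega=\mathbb{R}^{\mathcal{E}^d}$ carries the product Borel sigma-algebra; $\omega\in\Omega$ assigns a weight $\omega(e)$ to each edge. Assumption A1 (translation invariance): for every $z\in\mathbb{Z}^d$, $\mathbb{P}=\mathbb{P}\circ T_z^{-1}$, where $(T_z\omega)(e)=\omega(e+z)$ and $e+z=\{x+z,y+z\}$ for $e=\{x,y\}$. Assumption A2: for any distinct $e,f\in\mathcal{E}^d$, $\mathbb{P}(\omega(e)=\omega(f))=0$. The directed nearest neighbor graph $\mathcal{N}_D$ has vertex set $\mathbb{Z}^d$ and directed edges $\langle x,y\rangle$ for all $\{x,y\}\in\mathcal{E}^d$ with $\omega(\{x,y\})\le\omega(\{x,z\})$ for all $z$ with $\{x,z\}\in\mathcal{E}^d$ (each vertex points to the neighbor(s) minimizing the weight). For vertices $x,y$ of a directed graph, $x\to y$ means there is a directed path from $x$ to $y$; by convention $x\to x$. *)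

theory Defs
  imports "HOL-Probability.Probability"
begin

text \<open>The lattice Z^d is int ^ 'd for a finite index type 'd (so d = CARD('d) >= 1).
  Edges of Z^d are unordered pairs {x,y} with L1 distance 1.\<close>

definition l1dist :: "int ^ 'd::finite \<Rightarrow> int ^ 'd \<Rightarrow> int" where
  "l1dist x y = (\<Sum>i\<in>UNIV. \<bar>x $ i - y $ i\<bar>)"

definition lattice_edges :: "(int ^ 'd::finite) set set" where
  "lattice_edges = {{x, y} | x y. l1dist x y = 1}"

definition Omega :: "((int ^ 'd::finite) set \<Rightarrow> real) measure" where
  "Omega = PiM lattice_edges (\<lambda>_. borel)"

definition shift :: "int ^ 'd::finite \<Rightarrow> ((int ^ 'd) set \<Rightarrow> real) \<Rightarrow> ((int ^ 'd) set \<Rightarrow> real)" where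
  "shift z \<omega> = (\<lambda>e\<in>lattice_edges. \<omega> ((\<lambda>v. v + z) ` e))"

definition nnd_edge :: "((int ^ 'd::finite) set \<Rightarrow> real) \<Rightarrow> int ^ 'd \<Rightarrow> int ^ 'd \<Rightarrow> bool" where
  "nnd_edge \<omega> x y \<longleftrightarrow> {x, y} \<in> lattice_edges \<and>
     (\<forall>z. {x, z} \<in> lattice_edges \<longrightarrow> \<omega> {x, y} \<le> \<omega> {x, z})"

abbreviation reaches :: "((int ^ 'd::finite) set \<Rightarrow> real) \<Rightarrow> int ^ 'd \<Rightarrow> int ^ 'd \<Rightarrow> bool" where
  "reaches \<omega> \<equiv> (nnd_edge \<omega>)\<^sup>*\<^sup>*"

end

theory Submission
  imports Defs
begin

type_synonym 'd cfg = "(int ^ 'd) set \<Rightarrow> real"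

lemma l1dist_sym: "l1dist x y = l1dist y x"
  unfolding l1dist_def by (simp add: abs_minus_commute)

lemma l1dist_shift: "l1dist (x + z) (y + z) = l1dist x y"
  unfolding l1dist_def by simp

lemma l1dist_self: "l1dist x x = 0" unfolding l1dist_def by simp

lemma edge_iff: "{x, y} \<in> lattice_edges \<longleftrightarrow> l1dist x y = 1"
proof
  assume "{x,y} \<in> lattice_edges"
  then obtain u v where "{x,y} = {u,v}" "l1dist u v = 1" unfolding lattice_edges_def by blast
  then show "l1dist x y = 1" by (metis doubleton_eq_iff l1dist_sym)
qed (auto simp: lattice_edges_def)

lemma edge_neq: "{x, y} \<in> lattice_edges \<Longrightarrow> x \<noteq> y"
  by (auto simp: edge_iff l1dist_self)

lemma edge_shift: "{x + z, y + z} \<in> lattice_edges \<longleftrightarrow> {x, y} \<in> lattice_edges"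
  by (simp add: edge_iff l1dist_shift)

lemma edge_shift0: "{b, b + u} \<in> lattice_edges \<longleftrightarrow> {0, u} \<in> lattice_edges"
  using edge_shift[of 0 b u] by (simp add: add.commute)

lemma edge_img: "e \<in> lattice_edges \<Longrightarrow> (\<lambda>v. v + z) ` e \<in> lattice_edges"
proof -
  assume "e \<in> lattice_edges"
  then obtain x y where "e = {x, y}" "{x, y} \<in> lattice_edges" unfolding lattice_edges_def by blast
  then show ?thesis using edge_shift[of x z y] by simp
qed

lemma finite_box: 
  assumes "\<And>i. finite (S i)"
  shows "finite {c :: int ^ 'd::finite. \<forall>i. c $ i \<in> S i}"
proof -
  have "{c :: int ^ 'd. \<forall>i. c $ i \<in> S i} = vec_nth -` (PiE UNIV S)"
    by auto
  moreover have "inj vec_nth" by (rule injI) (simp add: vec_eq_iff)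
  ultimately show ?thesis
    by (metis assms finite_PiE finite_class.finite_UNIV finite_vimageI)
qed

lemma finite_nbrs: "finite {y. {x :: int ^ 'd::finite, y} \<in> lattice_edges}"
proof -
  have "{y. {x, y} \<in> lattice_edges} \<subseteq> {c. \<forall>i. c $ i \<in> {x $ i - 1 .. x $ i + 1}}"
  proof (safe)
    fix c i assume "{x, c} \<in> lattice_edges"
    then have "l1dist x c = 1" by (simp add: edge_iff)
    moreover have "\<bar>x $ i - c $ i\<bar> \<le> l1dist x c"
      unfolding l1dist_def by (rule member_le_sum) auto
    ultimately show "c $ i \<in> {x $ i - 1 .. x $ i + 1}" by auto
  qed
  then show ?thesis by (rule finite_subset) (rule finite_box, simp)
qed

lemma nbr_exists: "\<exists>y. {x :: int ^ 'd::finite, y} \<in> lattice_edges"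
proof -
  obtain i :: 'd where True by simp
  have "l1dist x (x + axis i 1) = 1"
    unfolding l1dist_def axis_def by simp
  then show ?thesis by (auto simp: edge_iff)
qed

lemma nnd_exists: "\<exists>y. nnd_edge \<omega> x y"
proof -
  let ?N = "{y. {x,y} \<in> lattice_edges}"
  let ?W = "(\<lambda>y. \<omega> {x,y}) ` ?N"
  have fin: "finite ?W" using finite_nbrs by blast
  have ne: "?W \<noteq> {}" using nbr_exists by blast
  obtain y where y: "y \<in> ?N" "\<omega> {x,y} = Min ?W" using Min_in[OF fin ne] by auto
  show ?thesis unfolding nnd_edge_def
  proof (intro exI[of _ y] conjI allI impI)
    show "{x,y} \<in> lattice_edges" using y(1) by simp
    fix z assume "{x,z} \<in> lattice_edges"
    then have "\<omega> {x,z} \<in> ?W" by blast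
    then show "\<omega> {x,y} \<le> \<omega> {x,z}" using y(2) fin by (simp add: Min_le)
  qed
qed

definition nx :: "'d::finite cfg \<Rightarrow> int ^ 'd \<Rightarrow> int ^ 'd" where
  "nx \<omega> x = (SOME y. nnd_edge \<omega> x y)"

lemma nnd_nx: "nnd_edge \<omega> x (nx \<omega> x)"
  unfolding nx_def using nnd_exists by (rule someI_ex)

definition nties :: "'d::finite cfg \<Rightarrow> bool" where
  "nties \<omega> \<longleftrightarrow> (\<forall>e\<in>lattice_edges. \<forall>f\<in>lattice_edges. e \<noteq> f \<longrightarrow> \<omega> e \<noteq> \<omega> f)"

lemma nnd_edge_in: "nnd_edge \<omega> x y \<Longrightarrow> {x, y} \<in> lattice_edges"
  by (simp add: nnd_edge_def)

lemma nnd_unique: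
  assumes "nties \<omega>" "nnd_edge \<omega> x y" "nnd_edge \<omega> x y'"
  shows "y = y'"
proof -
  have e1: "{x,y} \<in> lattice_edges" and e2: "{x,y'} \<in> lattice_edges"
    using assms(2,3) nnd_edge_in by auto
  have "\<omega> {x,y} \<le> \<omega> {x,y'}" using assms(2) e2 unfolding nnd_edge_def by blast
  moreover have "\<omega> {x,y'} \<le> \<omega> {x,y}" using assms(3) e1 unfolding nnd_edge_def by blast
  ultimately have "\<omega> {x,y} = \<omega> {x,y'}" by simp
  then have "{x,y} = {x,y'}" using assms(1) e1 e2 unfolding nties_def by metis
  moreover have "x \<noteq> y" using e1 edge_neq by blast
  ultimately show ?thesis by (metis doubleton_eq_iff)
qed

lemma nnd_iff_nx: "nties \<omega> \<Longrightarrow> nnd_edge \<omega> x y \<longleftrightarrow> y = nx \<omega> x"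
  using nnd_unique[of \<omega> x y "nx \<omega> x"] nnd_nx[of \<omega> x] by blast
lemma reaches_orbit:
  assumes "nties \<omega>"
  shows "reaches \<omega> a b \<longleftrightarrow> (\<exists>k. b = (nx \<omega> ^^ k) a)"
proof
  assume "reaches \<omega> a b"
  then show "\<exists>k. b = (nx \<omega> ^^ k) a"
  proof (induction rule: rtranclp_induct)
    case base
    then show ?case by (auto intro: exI[of _ 0])
  next
    case (step y z)
    then obtain k where "y = (nx \<omega> ^^ k) a" by blast
    then show ?case using step(2) nnd_iff_nx[OF assms] by (auto intro!: exI[of _ "Suc k"])
  qed
next
  assume "\<exists>k. b = (nx \<omega> ^^ k) a"
  then obtain k where "b = (nx \<omega> ^^ k) a" by blast
  moreover have "reaches \<omega> a ((nx \<omega> ^^ k) a)" for k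
    by (induction k) (auto intro: rtranclp.rtrancl_into_rtrancl nnd_nx)
  ultimately show "reaches \<omega> a b" by simp
qed

lemma shift_pair: "{x,y} \<in> lattice_edges \<Longrightarrow> shift z \<omega> {x,y} = \<omega> {x+z, y+z}"
  by (simp add: shift_def)

lemma nnd_shift: "nnd_edge (shift z \<omega>) x y \<longleftrightarrow> nnd_edge \<omega> (x+z) (y+z)"
proof
  assume L: "nnd_edge (shift z \<omega>) x y"
  then have e: "{x,y} \<in> lattice_edges" by (simp add: nnd_edge_def)
  show "nnd_edge \<omega> (x+z) (y+z)" unfolding nnd_edge_def
  proof (intro conjI allI impI)
    show "{x + z, y + z} \<in> lattice_edges" using e edge_shift by blast
    fix w assume w: "{x + z, w} \<in> lattice_edges"
    then have w': "{x, w - z} \<in> lattice_edges" using edge_shift[of x z "w - z"] by simp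
    have "shift z \<omega> {x,y} \<le> shift z \<omega> {x, w - z}" using L w' unfolding nnd_edge_def by blast
    then show "\<omega> {x + z, y + z} \<le> \<omega> {x + z, w}" using e w' by (simp add: shift_pair)
  qed
next
  assume R: "nnd_edge \<omega> (x+z) (y+z)"
  then have e: "{x,y} \<in> lattice_edges" by (simp add: nnd_edge_def edge_shift)
  show "nnd_edge (shift z \<omega>) x y" unfolding nnd_edge_def
  proof (intro conjI allI impI)
    show "{x, y} \<in> lattice_edges" using e .
    fix w assume w: "{x, w} \<in> lattice_edges"
    then have w': "{x + z, w + z} \<in> lattice_edges" using edge_shift by blast
    have "\<omega> {x+z,y+z} \<le> \<omega> {x+z, w+z}" using R w' unfolding nnd_edge_def by blast
    then show "shift z \<omega> {x, y} \<le> shift z \<omega> {x, w}" using e w by (simp add: shift_pair)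
  qed
qed

lemma reaches_shift: "reaches (shift z \<omega>) a b \<longleftrightarrow> reaches \<omega> (a+z) (b+z)"
proof
  assume "reaches (shift z \<omega>) a b"
  then show "reaches \<omega> (a+z) (b+z)"
    by (induction rule: rtranclp_induct) (auto simp: nnd_shift intro: rtranclp.rtrancl_into_rtrancl)
next
  have "reaches \<omega> p q \<Longrightarrow> reaches (shift z \<omega>) (p - z) (q - z)" for p q
    by (induction rule: rtranclp_induct) (auto simp: nnd_shift intro: rtranclp.rtrancl_into_rtrancl)
  then show "reaches \<omega> (a+z) (b+z) \<Longrightarrow> reaches (shift z \<omega>) a b" by fastforce
qed


definition N0 :: "(int ^ 'd::finite) set" where "N0 = {u. {0, u} \<in> lattice_edges}"

lemma finite_N0: "finite N0"
  unfolding N0_def by (rule finite_nbrs)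

definition T :: "'d::finite cfg \<Rightarrow> int^'d \<Rightarrow> int^'d \<Rightarrow> int^'d \<Rightarrow> ennreal" where
  "T \<omega> b c d = (if nnd_edge \<omega> b c \<and> nnd_edge \<omega> c d
      then ennreal (arctan (\<omega> {b,c}) - arctan (\<omega> {c,d}) + (if d = b then 1 else 0)) else 0)"

definition Dm :: "int^'d::finite \<Rightarrow> 'd cfg \<Rightarrow> ennreal" where
  "Dm b \<omega> = (\<Sum>u\<in>N0. \<Sum>v\<in>N0. T \<omega> b (b+u) (b+u+v))"

definition Dr :: "'d::finite cfg \<Rightarrow> int^'d \<Rightarrow> real" where
  "Dr \<omega> b = arctan (\<omega> {b, nx \<omega> b}) - arctan (\<omega> {nx \<omega> b, nx \<omega> (nx \<omega> b)})
     + (if nx \<omega> (nx \<omega> b) = b then 1 else 0)"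

lemma Dm_eq:
  assumes nt: "nties \<omega>"
  shows "Dm b \<omega> = ennreal (Dr \<omega> b)"
proof -
  have inner: "(\<Sum>v\<in>N0. T \<omega> b c (c+v)) = (if c = nx \<omega> b then ennreal (Dr \<omega> b) else 0)" for c
  proof (cases "c = nx \<omega> b")
    case False
    then have "\<not> nnd_edge \<omega> b c" using nnd_iff_nx[OF nt] by blast
    then show ?thesis using False by (simp add: T_def)
  next
    case True
    have mem: "nx \<omega> c - c \<in> N0"
      using edge_shift0[of c "nx \<omega> c - c"] nnd_edge_in[OF nnd_nx[of \<omega> c]] by (simp add: N0_def)
    have "T \<omega> b c (c+v) = (if v = nx \<omega> c - c then ennreal (Dr \<omega> b) else 0)" for v
    proof -
      have "c + v = nx \<omega> c \<longleftrightarrow> v = nx \<omega> c - c"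
        by (metis add.commute add_diff_cancel_left' diff_add_cancel)
      then have "nnd_edge \<omega> c (c+v) \<longleftrightarrow> v = nx \<omega> c - c" using nnd_iff_nx[OF nt, of c "c+v"] by simp
      moreover have "nnd_edge \<omega> b c" using True nnd_nx by simp
      ultimately show ?thesis using True by (auto simp: T_def Dr_def)
    qed
    then have "(\<Sum>v\<in>N0. T \<omega> b c (c+v)) = (\<Sum>v\<in>N0. if v = nx \<omega> c - c then ennreal (Dr \<omega> b) else 0)"
      by simp
    also have "\<dots> = ennreal (Dr \<omega> b)" by (rule trans[OF sum.delta[OF finite_N0]]) (simp add: mem)
    finally show ?thesis using True by simp
  qed
  have memb: "nx \<omega> b - b \<in> N0"
    using edge_shift0[of b "nx \<omega> b - b"] nnd_edge_in[OF nnd_nx[of \<omega> b]] by (simp add: N0_def)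
  have bu: "b + u = nx \<omega> b \<longleftrightarrow> u = nx \<omega> b - b" for u
    by (metis add.commute add_diff_cancel_left' diff_add_cancel)
  have "Dm b \<omega> = (\<Sum>u\<in>N0. if u = nx \<omega> b - b then ennreal (Dr \<omega> b) else 0)"
    unfolding Dm_def by (rule sum.cong) (auto simp: inner bu)
  also have "\<dots> = ennreal (Dr \<omega> b)" by (rule trans[OF sum.delta[OF finite_N0]]) (simp add: memb)
  finally show ?thesis .
qed

lemma nties_D: "nties \<omega> \<Longrightarrow> e \<in> lattice_edges \<Longrightarrow> f \<in> lattice_edges \<Longrightarrow> e \<noteq> f \<Longrightarrow> \<omega> e \<noteq> \<omega> f"
  unfolding nties_def by blast

lemma Dr_pos:
  assumes nt: "nties \<omega>"
  shows "Dr \<omega> b > 0"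
proof -
  define c where "c = nx \<omega> b"
  define d where "d = nx \<omega> c"
  have bc: "nnd_edge \<omega> b c" and cd: "nnd_edge \<omega> c d" unfolding c_def d_def by (rule nnd_nx)+
  have ebc: "{b,c} \<in> lattice_edges" and ecd: "{c,d} \<in> lattice_edges" using bc cd nnd_edge_in by auto
  have cb: "{c,b} = {b,c}" by auto
  have ecb: "{c,b} \<in> lattice_edges" using ebc cb by simp
  have "\<omega> {c,d} \<le> \<omega> {c,b}" using cd ecb unfolding nnd_edge_def by blast
  then have le: "\<omega> {c,d} \<le> \<omega> {b,c}" using cb by simp
  show ?thesis
  proof (cases "d = b")
    case True
    have "Dr \<omega> b = arctan (\<omega> {b,c}) - arctan (\<omega> {c,d}) + 1"
      unfolding Dr_def c_def[symmetric] d_def[symmetric] using True by simp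
    then show ?thesis using True cb by simp
  next
    case False
    have "c \<noteq> d" using ecd edge_neq by blast
    then have "{c,d} \<noteq> {b,c}" using False by (auto simp: doubleton_eq_iff)
    then have "\<omega> {c,d} \<noteq> \<omega> {b,c}" by (rule nties_D[OF nt ecd ebc])
    with le have "\<omega> {c,d} < \<omega> {b,c}" by simp
    then have "arctan (\<omega> {c,d}) < arctan (\<omega> {b,c})" by (simp add: arctan_less_iff)
    then show ?thesis unfolding Dr_def c_def[symmetric] d_def[symmetric] using False by simp
  qed
qed

lemma T_shift: "T (shift z \<omega>) b c d = T \<omega> (b+z) (c+z) (d+z)"
proof (cases "nnd_edge \<omega> (b+z) (c+z) \<and> nnd_edge \<omega> (c+z) (d+z)")
  case True
  then have "nnd_edge (shift z \<omega>) b c" "nnd_edge (shift z \<omega>) c d" by (simp_all add: nnd_shift)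
  then have "{b,c} \<in> lattice_edges" "{c,d} \<in> lattice_edges" using nnd_edge_in by auto
  then have h1: "shift z \<omega> {b,c} = \<omega> {b+z,c+z}" and h2: "shift z \<omega> {c,d} = \<omega> {c+z,d+z}"
    by (simp_all add: shift_pair)
  show ?thesis unfolding T_def nnd_shift h1 h2 by simp
next
  case False
  then have "\<not> (nnd_edge (shift z \<omega>) b c \<and> nnd_edge (shift z \<omega>) c d)" by (simp add: nnd_shift)
  then show ?thesis by (simp only: T_def if_not_P[OF False] if_not_P if_False)
qed

lemma Dm_shift: "Dm b (shift z \<omega>) = Dm (b+z) \<omega>"
  unfolding Dm_def T_shift by (simp add: algebra_simps)

lemma meas_coord:
  assumes S: "sets P = sets (Omega :: 'd::finite cfg measure)" and e: "e \<in> lattice_edges"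
  shows "(\<lambda>\<omega>. \<omega> e) \<in> borel_measurable P"
proof -
  have "(\<lambda>\<omega>. \<omega> e) \<in> measurable (Omega :: 'd cfg measure) borel"
    unfolding Omega_def using e by (rule measurable_component_singleton)
  then show ?thesis by (subst measurable_cong_sets[OF S refl])
qed

lemma meas_shift:
  assumes S: "sets P = sets (Omega :: 'd::finite cfg measure)"
  shows "shift z \<in> measurable P P"
proof -
  have "(\<lambda>\<omega>. \<lambda>e\<in>lattice_edges. \<omega> ((\<lambda>v. v + z) ` e)) \<in> measurable (Omega :: 'd cfg measure) (Omega :: 'd cfg measure)"
    unfolding Omega_def
  proof (rule measurable_restrict)
    fix e :: "(int ^ 'd) set" assume "e \<in> lattice_edges"
    then have "(\<lambda>v. v + z) ` e \<in> lattice_edges" by (rule edge_img)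
    then show "(\<lambda>\<omega>. \<omega> ((\<lambda>v. v + z) ` e)) \<in> measurable (Pi\<^sub>M lattice_edges (\<lambda>_. borel)) borel"
      by (rule measurable_component_singleton)
  qed
  then show ?thesis using measurable_cong_sets[OF S S] unfolding shift_def by simp
qed

lemma pred_nnd:
  assumes S: "sets P = sets (Omega :: 'd::finite cfg measure)"
  shows "Measurable.pred P (\<lambda>\<omega>. nnd_edge \<omega> x y)"
proof (cases "{x,y} \<in> lattice_edges")
  case False
  then show ?thesis by (simp add: nnd_edge_def pred_def)
next
  case True
  note m1[measurable] = meas_coord[OF S True]
  have "Measurable.pred P (\<lambda>\<omega>. \<forall>w. {x,w} \<in> lattice_edges \<longrightarrow> \<omega> {x,y} \<le> \<omega> {x,w})"
  proof (rule pred_intros_countable(1))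
    fix w
    show "Measurable.pred P (\<lambda>\<omega>. {x,w} \<in> lattice_edges \<longrightarrow> \<omega> {x,y} \<le> \<omega> {x,w})"
    proof (cases "{x,w} \<in> lattice_edges")
      case True
      note m2[measurable] = meas_coord[OF S True]
      have "{\<omega> \<in> space P. \<omega> {x,y} \<le> \<omega> {x,w}} \<in> sets P" using m1 m2 by (rule borel_measurable_le)
      then show ?thesis using True by (simp add: pred_def)
    next
      case False
      then show ?thesis by (simp add: pred_def)
    qed
  qed
  then show ?thesis using True by (simp add: nnd_edge_def)
qed

lemma pred_relpow:
  assumes S: "sets P = sets (Omega :: 'd::finite cfg measure)"
  shows "Measurable.pred P (\<lambda>\<omega>. (nnd_edge \<omega> ^^ n) a b)"
proof (induction n arbitrary: b)
  case 0
  then show ?case by (simp add: pred_def)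
next
  case (Suc n)
  have "Measurable.pred P (\<lambda>\<omega>. \<exists>c. (nnd_edge \<omega> ^^ n) a c \<and> nnd_edge \<omega> c b)"
    using Suc pred_nnd[OF S] by (intro pred_intros_countable(2) pred_intros_logic) auto
  then show ?case by (simp add: relcompp_apply)
qed

lemma pred_reaches:
  assumes S: "sets P = sets (Omega :: 'd::finite cfg measure)"
  shows "Measurable.pred P (\<lambda>\<omega>. reaches \<omega> a b)"
  unfolding rtranclp_power by (intro pred_intros_countable(2) pred_relpow[OF S])

lemma meas_T:
  assumes S: "sets P = sets (Omega :: 'd::finite cfg measure)"
    and e1: "{b,c} \<in> lattice_edges" and e2: "{c,d} \<in> lattice_edges"
  shows "(\<lambda>\<omega>. T \<omega> b c d) \<in> borel_measurable P"
proof -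
  note [measurable] = meas_coord[OF S e1] meas_coord[OF S e2] pred_nnd[OF S]
  have p: "Measurable.pred P (\<lambda>\<omega>. nnd_edge \<omega> b c \<and> nnd_edge \<omega> c d)"
    by (intro pred_intros_logic pred_nnd[OF S])
  show ?thesis unfolding T_def
    by (rule measurable_If) (use p in \<open>simp_all add: pred_def\<close>)
qed

lemma meas_Dm:
  assumes S: "sets P = sets (Omega :: 'd::finite cfg measure)"
  shows "Dm b \<in> borel_measurable P"
proof -
  have "(\<lambda>\<omega>. \<Sum>u\<in>N0. \<Sum>v\<in>N0. T \<omega> b (b+u) (b+u+v)) \<in> borel_measurable P"
  proof (intro borel_measurable_sum meas_T[OF S])
    fix u v :: "int ^ 'd" assume "u \<in> N0" "v \<in> N0"
    then show "{b, b+u} \<in> lattice_edges" "{b+u, b+u+v} \<in> lattice_edges"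
      by (simp_all add: N0_def edge_shift0)
  qed
  then show ?thesis unfolding Dm_def[abs_def] by simp
qed


lemma count_eq_suminf:
  fixes f :: "'a::countable \<Rightarrow> ennreal"
  assumes inf: "infinite (UNIV :: 'a set)"
  shows "(\<integral>\<^sup>+x. f x \<partial>count_space UNIV) = (\<Sum>n. f (from_nat_into UNIV n))"
proof -
  have *: "bij_betw (from_nat_into (UNIV :: 'a set)) UNIV UNIV"
    using bij_betw_from_nat_into[OF countableI_type inf] .
  have "(\<integral>\<^sup>+x. f x \<partial>count_space UNIV) = (\<integral>\<^sup>+n. f (from_nat_into UNIV n) \<partial>count_space UNIV)"
    by (rule nn_integral_bij_count_space[OF *, symmetric])
  also have "\<dots> = (\<Sum>n. f (from_nat_into UNIV n))" by (rule nn_integral_count_space_nat)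
  finally show ?thesis .
qed

lemma count_space_le_finite:
  fixes f :: "'a::countable \<Rightarrow> ennreal"
  assumes le: "\<And>F. finite F \<Longrightarrow> sum f F \<le> C"
  shows "(\<integral>\<^sup>+x. f x \<partial>count_space UNIV) \<le> C"
proof (cases "finite (UNIV :: 'a set)")
  case True
  then show ?thesis using le by (simp add: nn_integral_count_space_finite)
next
  case False
  have *: "bij_betw (from_nat_into (UNIV :: 'a set)) UNIV UNIV"
    using bij_betw_from_nat_into[OF countableI_type False] .
  have "(\<integral>\<^sup>+x. f x \<partial>count_space UNIV) = (\<Sum>n. f (from_nat_into UNIV n))"
    by (rule count_eq_suminf[OF False])
  also have "\<dots> = (SUP n. \<Sum>i<n. f (from_nat_into UNIV i))" by (rule suminf_eq_SUP)
  also have "\<dots> \<le> C"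
  proof (rule SUP_least)
    fix n
    have inj: "inj_on (from_nat_into (UNIV :: 'a set)) {..<n}"
      using * by (meson bij_betw_imp_inj_on inj_on_subset subset_UNIV)
    have "(\<Sum>i<n. f (from_nat_into UNIV i)) = sum f (from_nat_into UNIV ` {..<n})"
      using sum.reindex[OF inj, of f] by simp
    also have "\<dots> \<le> C" by (rule le) simp
    finally show "(\<Sum>i<n. f (from_nat_into UNIV i)) \<le> C" .
  qed
  finally show ?thesis .
qed

lemma meas_count_int:
  fixes f :: "'a::countable \<Rightarrow> 'b \<Rightarrow> ennreal"
  assumes m: "\<And>i. f i \<in> borel_measurable M"
  shows "(\<lambda>x. \<integral>\<^sup>+i. f i x \<partial>count_space UNIV) \<in> borel_measurable M"
proof (cases "finite (UNIV :: 'a set)")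
  case True
  then show ?thesis using m by (simp add: nn_integral_count_space_finite)
next
  case False
  note [measurable] = m
  show ?thesis
    unfolding count_eq_suminf[OF False] by measurable
qed

lemma nx_mono: "\<omega> {nx \<omega> b, nx \<omega> (nx \<omega> b)} \<le> \<omega> {b, nx \<omega> b}"
proof -
  have e: "{nx \<omega> b, b} \<in> lattice_edges" using nnd_edge_in[OF nnd_nx[of \<omega> b]] by (simp add: insert_commute)
  have "\<omega> {nx \<omega> b, nx \<omega> (nx \<omega> b)} \<le> \<omega> {nx \<omega> b, b}"
    using nnd_nx[of \<omega> "nx \<omega> b"] e unfolding nnd_edge_def by blast
  then show ?thesis by (simp add: insert_commute)
qed

lemma orbit_cycle:
  assumes "nx \<omega> (nx \<omega> b0) = b0"
  shows "(nx \<omega> ^^ j) b0 \<in> {b0, nx \<omega> b0}"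
  by (induction j) (use assms in auto)

lemma orbit_sum:
  shows "(\<Sum>b\<in>(\<lambda>k. (nx \<omega> ^^ k) a) ` {..<N}. Dr \<omega> b) \<le> pi + 2"
proof -
  define f where "f k = (nx \<omega> ^^ k) a" for k
  define I where "I = f ` {..<N}"
  define g where "g b = arctan (\<omega> {b, nx \<omega> b})" for b
  define D1 where "D1 b = g b - g (nx \<omega> b)" for b
  define D2 where "D2 b = (if nx \<omega> (nx \<omega> b) = b then 1 else 0 :: real)" for b
  have split: "Dr \<omega> b = D1 b + D2 b" for b unfolding Dr_def D1_def D2_def g_def by simp
  have D1_nn: "D1 b \<ge> 0" for b
    unfolding D1_def g_def using nx_mono[of \<omega> b] by (simp add: arctan_le_iff)
  have fS: "f (Suc k) = nx \<omega> (f k)" for k unfolding f_def by simp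
  have s1: "(\<Sum>b\<in>I. D1 b) \<le> pi"
  proof -
    have "(\<Sum>b\<in>I. D1 b) \<le> (\<Sum>k<N. D1 (f k))"
      unfolding I_def using sum_image_le[of "{..<N}" D1 f] D1_nn by (simp add: o_def)
    also have "\<dots> = (\<Sum>k<N. g (f k) - g (f (Suc k)))" by (simp add: D1_def fS)
    also have "\<dots> = g (f 0) - g (f N)" by (rule sum_lessThan_telescope')
    also have "\<dots> \<le> pi" unfolding g_def using arctan_bounded[of "\<omega> {f 0, nx \<omega> (f 0)}"]
        arctan_bounded[of "\<omega> {f N, nx \<omega> (f N)}"] by simp
    finally show ?thesis .
  qed
  have s2: "(\<Sum>b\<in>I. D2 b) \<le> 2"
  proof -
    let ?C = "{b\<in>I. nx \<omega> (nx \<omega> b) = b}"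
    have finI: "finite I" unfolding I_def by simp
    have eq: "(\<Sum>b\<in>I. D2 b) = real (card ?C)"
      unfolding D2_def using finI by (subst sum.inter_filter[symmetric]) auto
    have "card ?C \<le> 2"
    proof (cases "?C = {}")
      case True show ?thesis unfolding True by simp
    next
      case False
      then obtain b0 where b0: "b0 \<in> I" "nx \<omega> (nx \<omega> b0) = b0" by blast
      then obtain i where b0i: "b0 = f i" unfolding I_def by blast
      have "?C \<subseteq> {b0, nx \<omega> b0}"
      proof
        fix b assume "b \<in> ?C"
        then have bI: "b \<in> I" and Pb: "nx \<omega> (nx \<omega> b) = b" by auto
        then obtain j where bj: "b = f j" unfolding I_def by blast
        show "b \<in> {b0, nx \<omega> b0}"
        proof (cases "i \<le> j")
          case True
          have "f j = (nx \<omega> ^^ (j - i)) (f i)" unfolding f_def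
            using True by (metis funpow_add comp_apply le_add_diff_inverse2)
          then show ?thesis using orbit_cycle[OF b0(2), of "j - i"] bj b0i by simp
        next
          case False
          have "f i = (nx \<omega> ^^ (i - j)) (f j)" unfolding f_def
            using False by (metis funpow_add comp_apply le_add_diff_inverse2 nat_le_linear)
          then have "b0 \<in> {b, nx \<omega> b}" using orbit_cycle[OF Pb, of "i - j"] bj b0i by simp
          then show ?thesis using Pb by auto
        qed
      qed
      then have "card ?C \<le> card {b0, nx \<omega> b0}" by (intro card_mono) auto
      also have "\<dots> \<le> 2" by (cases "b0 = nx \<omega> b0") auto
      finally show ?thesis .
    qed
    then show ?thesis using eq by simp
  qed
  have "(\<Sum>b\<in>I. Dr \<omega> b) = (\<Sum>b\<in>I. D1 b) + (\<Sum>b\<in>I. D2 b)"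
    unfolding split by (rule sum.distrib)
  also have "\<dots> \<le> pi + 2" using s1 s2 by simp
  finally show ?thesis unfolding I_def f_def .
qed

lemma out_bound:
  assumes nt: "nties \<omega>"
  shows "(\<integral>\<^sup>+b. (if reaches \<omega> a b then Dm b \<omega> else 0) \<partial>count_space UNIV) \<le> ennreal (pi + 2)"
proof (rule count_space_le_finite)
  fix F :: "(int ^ 'a) set" assume fin: "finite F"
  let ?R = "{b \<in> F. reaches \<omega> a b}"
  let ?f = "\<lambda>k. (nx \<omega> ^^ k) a"
  have Dnn: "\<And>b. 0 \<le> Dr \<omega> b" using Dr_pos[OF nt] less_imp_le by blast
  have "(\<Sum>b\<in>F. if reaches \<omega> a b then Dm b \<omega> else 0) = (\<Sum>b\<in>?R. Dm b \<omega>)"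
    using fin by (simp add: sum.inter_filter)
  also have "\<dots> = (\<Sum>b\<in>?R. ennreal (Dr \<omega> b))" using Dm_eq[OF nt] by simp
  also have "\<dots> = ennreal (\<Sum>b\<in>?R. Dr \<omega> b)" using Dnn by simp
  also have "\<dots> \<le> ennreal (pi + 2)"
  proof (rule ennreal_leI)
    have "?R \<subseteq> ?f ` UNIV" using reaches_orbit[OF nt] by auto
    moreover have "finite ?R" using fin by simp
    ultimately obtain K where K: "finite K" "?R = ?f ` K"
      using finite_subset_image[of ?R ?f UNIV] by blast
    then obtain N where "K \<subseteq> {..<N}" using finite_nat_bounded by blast
    then have sub: "?R \<subseteq> ?f ` {..<N}" using K by auto
    have "(\<Sum>b\<in>?R. Dr \<omega> b) \<le> (\<Sum>b\<in>?f ` {..<N}. Dr \<omega> b)"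
      using sub Dnn by (intro sum_mono2) auto
    also have "\<dots> \<le> pi + 2" by (rule orbit_sum)
    finally show "(\<Sum>b\<in>?R. Dr \<omega> b) \<le> pi + 2" .
  qed
  finally show "(\<Sum>b\<in>F. if reaches \<omega> a b then Dm b \<omega> else 0) \<le> ennreal (pi + 2)" .
qed


lemma mtp:
  fixes P :: "'d::finite cfg measure" and F :: "int^'d \<Rightarrow> int^'d \<Rightarrow> 'd cfg \<Rightarrow> ennreal"
  assumes S: "sets P = sets (Omega :: 'd cfg measure)"
    and A1: "\<And>z. distr P P (shift z) = P"
    and M: "\<And>a b. F a b \<in> borel_measurable P"
    and C: "\<And>a b z \<omega>. F a b (shift z \<omega>) = F (a+z) (b+z) \<omega>"
  shows "(\<integral>\<^sup>+\<omega>. (\<integral>\<^sup>+b. F x b \<omega> \<partial>count_space UNIV) \<partial>P) = (\<integral>\<^sup>+\<omega>. (\<integral>\<^sup>+a. F a x \<omega> \<partial>count_space UNIV) \<partial>P)"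
proof -
  have "(\<integral>\<^sup>+\<omega>. (\<integral>\<^sup>+b. F x b \<omega> \<partial>count_space UNIV) \<partial>P) = (\<integral>\<^sup>+b. (\<integral>\<^sup>+\<omega>. F x b \<omega> \<partial>P) \<partial>count_space UNIV)"
    by (rule nn_integral_count_space_nn_integral) (auto intro: M)
  also have "\<dots> = (\<integral>\<^sup>+b. (\<integral>\<^sup>+\<omega>. F (x + x - b) x \<omega> \<partial>P) \<partial>count_space UNIV)"
  proof (rule nn_integral_cong)
    fix b :: "int ^ 'd"
    have "(\<integral>\<^sup>+\<omega>. F (x + x - b) x \<omega> \<partial>P) = (\<integral>\<^sup>+\<omega>. F (x + x - b) x \<omega> \<partial>(distr P P (shift (b - x))))"
      by (simp add: A1)
    also have "\<dots> = (\<integral>\<^sup>+\<omega>. F (x + x - b) x (shift (b - x) \<omega>) \<partial>P)"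
      by (rule nn_integral_distr[OF meas_shift[OF S]]) (simp add: A1 M)
    also have "\<dots> = (\<integral>\<^sup>+\<omega>. F x b \<omega> \<partial>P)"
      by (simp add: C algebra_simps)
    finally show "(\<integral>\<^sup>+\<omega>. F x b \<omega> \<partial>P) = (\<integral>\<^sup>+\<omega>. F (x + x - b) x \<omega> \<partial>P)" by simp
  qed
  also have "\<dots> = (\<integral>\<^sup>+a. (\<integral>\<^sup>+\<omega>. F a x \<omega> \<partial>P) \<partial>count_space UNIV)"
  proof (rule nn_integral_bij_count_space)
    show "bij_betw (\<lambda>b. x + x - b) UNIV UNIV"
      by (rule bij_betwI[where g="\<lambda>b. x + x - b"]) auto
  qed
  also have "\<dots> = (\<integral>\<^sup>+\<omega>. (\<integral>\<^sup>+a. F a x \<omega> \<partial>count_space UNIV) \<partial>P)"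
    by (rule nn_integral_count_space_nn_integral[symmetric]) (auto intro: M)
  finally show ?thesis .
qed

theorem theorem1:
  fixes P :: "((int ^ 'd::finite) set \<Rightarrow> real) measure"
  assumes "prob_space P"
    and "sets P = sets (Omega :: ((int ^ 'd) set \<Rightarrow> real) measure)"
    and A1: "\<And>z :: int ^ 'd. distr P P (shift z) = P"
    and A2: "\<And>e f. e \<in> (lattice_edges :: (int ^ 'd) set set) \<Longrightarrow> f \<in> lattice_edges \<Longrightarrow> e \<noteq> f \<Longrightarrow>
             measure P {\<omega> \<in> space P. \<omega> e = \<omega> f} = 0"
  shows "AE \<omega> in P. \<forall>x :: int ^ 'd. finite {y. reaches \<omega> y x}"
proof -
  interpret prob_space P by fact
  note S = assms(2)
  define F where "F a b \<omega> = (if reaches \<omega> a b then Dm b \<omega> else 0)" for a b :: "int ^ 'd" and \<omega> :: "'d cfg"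
  have Fm: "F a b \<in> borel_measurable P" for a b
  proof -
    have "{\<omega> \<in> space P. reaches \<omega> a b} \<in> sets P" using pred_reaches[OF S] by (simp add: pred_def)
    then show ?thesis unfolding F_def[abs_def]
      by (intro measurable_If meas_Dm[OF S]) auto
  qed
  have Fc: "F a b (shift z \<omega>) = F (a+z) (b+z) \<omega>" for a b z \<omega>
    by (simp add: F_def reaches_shift Dm_shift)
  have cE: "countable (lattice_edges :: (int^'d) set set)"
  proof -
    have "(lattice_edges :: (int^'d) set set) \<subseteq> (\<lambda>(x,y). {x,y}) ` UNIV"
      unfolding lattice_edges_def by auto
    then show ?thesis by (rule countable_subset) simp
  qed
  have AEnt: "AE \<omega> in P. nties \<omega>"
    unfolding nties_def
  proof (intro AE_ball_countable' cE)
    fix e f :: "(int ^ 'd) set" assume e: "e \<in> lattice_edges" and f: "f \<in> lattice_edges"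
    show "AE \<omega> in P. e \<noteq> f \<longrightarrow> \<omega> e \<noteq> \<omega> f"
    proof (cases "e = f")
      case True then show ?thesis by simp
    next
      case False
      note [measurable] = meas_coord[OF S e] meas_coord[OF S f]
      have ms: "{\<omega> \<in> space P. \<omega> e = \<omega> f} \<in> sets P" by measurable
      have "emeasure P {\<omega> \<in> space P. \<omega> e = \<omega> f} = 0"
        using A2[OF e f False] by (simp add: emeasure_eq_measure)
      then have "{\<omega> \<in> space P. \<omega> e = \<omega> f} \<in> null_sets P" using ms by auto
      then show ?thesis by (rule AE_I') auto
    qed
  qed
  have "AE \<omega> in P. finite {y. reaches \<omega> y x}" for x
  proof -
    have eq: "(\<integral>\<^sup>+\<omega>. (\<integral>\<^sup>+b. F x b \<omega> \<partial>count_space UNIV) \<partial>P) = (\<integral>\<^sup>+\<omega>. (\<integral>\<^sup>+a. F a x \<omega> \<partial>count_space UNIV) \<partial>P)"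
      by (rule mtp[where F=F, OF S A1 Fm Fc])
    have "(\<integral>\<^sup>+\<omega>. (\<integral>\<^sup>+b. F x b \<omega> \<partial>count_space UNIV) \<partial>P) \<le> (\<integral>\<^sup>+\<omega>. ennreal (pi + 2) \<partial>P)"
    proof (rule nn_integral_mono_AE)
      show "AE \<omega> in P. (\<integral>\<^sup>+b. F x b \<omega> \<partial>count_space UNIV) \<le> ennreal (pi + 2)"
        using AEnt by eventually_elim (unfold F_def, rule out_bound)
    qed
    also have "\<dots> = ennreal (pi + 2)" by (simp add: emeasure_space_1)
    finally have "(\<integral>\<^sup>+\<omega>. (\<integral>\<^sup>+a. F a x \<omega> \<partial>count_space UNIV) \<partial>P) \<noteq> \<infinity>"
      using eq by (auto simp: top_unique)
    then have "AE \<omega> in P. (\<integral>\<^sup>+a. F a x \<omega> \<partial>count_space UNIV) \<noteq> \<infinity>"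
      by (intro nn_integral_PInf_AE meas_count_int Fm)
    with AEnt show ?thesis
    proof eventually_elim
      case (elim \<omega>)
      have "(\<integral>\<^sup>+a. F a x \<omega> \<partial>count_space UNIV) = (\<integral>\<^sup>+a. Dm x \<omega> * indicator {a. reaches \<omega> a x} a \<partial>count_space UNIV)"
        by (intro nn_integral_cong) (simp add: F_def indicator_def)
      also have "\<dots> = Dm x \<omega> * emeasure (count_space UNIV) {a. reaches \<omega> a x}"
        by (rule nn_integral_cmult_indicator) simp
      finally have fin: "Dm x \<omega> * emeasure (count_space UNIV) {a. reaches \<omega> a x} \<noteq> \<infinity>"
        using elim(2) by simp
      have pos: "Dm x \<omega> \<noteq> 0" using Dm_eq[OF elim(1)] Dr_pos[OF elim(1), of x]
        by (simp add: ennreal_eq_0_iff)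
      show "finite {y. reaches \<omega> y x}"
      proof (rule ccontr)
        assume "infinite {y. reaches \<omega> y x}"
        then have "emeasure (count_space UNIV) {a. reaches \<omega> a x} = \<infinity>" by simp
        then show False using fin pos by (simp add: ennreal_mult_top)
      qed
    qed
  qed
  then show ?thesis by (simp add: AE_all_countable)
qed

end
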